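(* Let $\Theta\subseteq\mathbb{R}^d$ be closed and convex, let $\mathcal{D}(\cdot)$ be a distribution map and $\ell$ a loss. Suppose that $\ell$ is $\gamma$-strongly convex in $\theta$, $\beta$-smooth in $z$, that $\mathcal{D}(\cdot)$ is $\epsilon$-sensitive, and that the pair $(\mathcal{D}(\cdot),\ell)$ satisfies mixture dominance. Then the performative risk $\mathrm{PR}$ is $\lambda$-convex for $\lambda=\gamma-2\epsilon\beta$, i.e. $\theta\mapsto \mathrm{PR}(\theta)-\frac{\gamma-2\epsilon\beta}{2}\|\theta\|_2^2$ is convex on $\Theta$.
   Context: A distribution map $\mathcal{D}(\cdot)$ assigns to each $\theta\in\Theta$ a probability distribution $\mathcal{D}(\theta)$ over $\mathbb{R}^m$; $\ell(z;\theta)$ is a loss differentiable in $\theta$. The performative risk is $\mathrm{PR}(\theta)=\mathbb{E}_{z\sim\mathcal{D}(\theta)}\ell(z;\theta)$. For $\lambda\in\mathbb{R}$, $\mathrm{PR}$ is $\lambda$-convex if $\mathrm{PR}(\theta)-\frac{\lambda}{2}\|\theta\|_2^2$ is convex. Let $\mathcal{Z}=\bigcup_{\theta\in\Theta}\mathrm{supp}(\mathcal{D}(\theta))$. Assumptions: ($\epsilon$-sensitivity) $W_1(\mathcal{D}(\theta),\mathcal{D}(\theta'))\leq\epsilon\|\theta-\theta'\|_2$ for all $\theta,\theta'\in\Theta$, where $W_1$ is the Wasserstein-1 distance; ($\beta$-smooth in $z$) $\|\nabla_\theta\ell(z;\theta)-\nabla_\theta\ell(z';\theta)\|_2\leq\beta\|z-z'\|_2$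 for all $\theta\in\Theta$, $z,z'\in\mathcal{Z}$; ($\gamma$-strongly convex in $\theta$) for all $\theta,\theta',\theta_0\in\Theta$, $\mathbb{E}_{z\sim\mathcal{D}(\theta_0)}\ell(z;\theta)\geq \mathbb{E}_{z\sim\mathcal{D}(\theta_0)}\ell(z;\theta')+\mathbb{E}_{z\sim\mathcal{D}(\theta_0)}\nabla_\theta\ell(z;\theta')^\top(\theta-\theta')+\frac{\gamma}{2}\|\theta-\theta'\|_2^2$; (mixture dominance) for all $\theta,\theta',\theta_0\in\Theta$ and $\alpha\in(0,1)$, $\mathbb{E}_{z\sim\mathcal{D}(\alpha\theta+(1-\alpha)\theta')}\ell(z;\theta_0)\leq \mathbb{E}_{z\sim\alpha\mathcal{D}(\theta)+(1-\alpha)\mathcal{D}(\theta')}\ell(z;\theta_0)$, where $\alpha\mathcal{D}(\theta)+(1-\alpha)\mathcal{D}(\theta')$ denotes the mixture distribution. *)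

theory Defs
  imports "HOL-Probability.Probability"
begin

definition couplings :: "'b::euclidean_space measure \<Rightarrow> 'b measure \<Rightarrow> ('b \<times> 'b) measure set" where
  "couplings M N = {\<pi>. prob_space \<pi> \<and> sets \<pi> = sets (borel \<Otimes>\<^sub>M borel) \<and>
      distr \<pi> borel fst = M \<and> distr \<pi> borel snd = N}"

definition wasserstein1 :: "'b::euclidean_space measure \<Rightarrow> 'b measure \<Rightarrow> ennreal" where
  "wasserstein1 M N = (INF \<pi>\<in>couplings M N. \<integral>\<^sup>+ p. ennreal (dist (fst p) (snd p)) \<partial>\<pi>)"

definition measure_support :: "'b::euclidean_space measure \<Rightarrow> 'b set" where
  "measure_support M = {z. \<forall>U. open U \<and> z \<in> U \<longrightarrow> emeasure M U > 0}"

definition mixture :: "real \<Rightarrow> 'b measure \<Rightarrow> 'b measure \<Rightarrow> 'b measure" where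
  "mixture \<alpha> M N = measure_of (space M) (sets M)
      (\<lambda>A. ennreal \<alpha> * emeasure M A + ennreal (1 - \<alpha>) * emeasure N A)"

definition perf_risk :: "('a \<Rightarrow> 'b measure) \<Rightarrow> ('b \<Rightarrow> 'a \<Rightarrow> real) \<Rightarrow> 'a \<Rightarrow> real" where
  "perf_risk D l \<theta> = (\<integral>z. l z \<theta> \<partial>(D \<theta>))"

definition lambda_convex_on :: "real \<Rightarrow> 'a::real_normed_vector set \<Rightarrow> ('a \<Rightarrow> real) \<Rightarrow> bool" where
  "lambda_convex_on lam S f \<longleftrightarrow> convex_on S (\<lambda>\<theta>. f \<theta> - lam / 2 * norm \<theta> ^ 2)"

end

theory Submission
  imports Defs
begin



lemma mixture_props:
  assumes sN: "sets N = sets M" and a0: "0 \<le> \<alpha>" and a1: "\<alpha> \<le> 1"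
  shows "sets (mixture \<alpha> M N) = sets M" "space (mixture \<alpha> M N) = space M"
    "\<And>A. A \<in> sets M \<Longrightarrow> emeasure (mixture \<alpha> M N) A = ennreal \<alpha> * emeasure M A + ennreal (1 - \<alpha>) * emeasure N A"
proof -
  show s: "sets (mixture \<alpha> M N) = sets M"
    unfolding mixture_def by (simp add: sets.sets_measure_of_eq)
  then show "space (mixture \<alpha> M N) = space M" by (rule sets_eq_imp_space_eq)
  fix A assume A: "A \<in> sets M"
  have pos: "positive (sets M) (\<lambda>A. ennreal \<alpha> * emeasure M A + ennreal (1 - \<alpha>) * emeasure N A)"
    by (simp add: positive_def)
  have ca: "countably_additive (sets M) (\<lambda>A. ennreal \<alpha> * emeasure M A + ennreal (1 - \<alpha>) * emeasure N A)"
  proof (rule countably_additiveI)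
    fix F :: "nat \<Rightarrow> _" assume F: "range F \<subseteq> sets M" "disjoint_family F" "\<Union> (range F) \<in> sets M"
    have FN: "range F \<subseteq> sets N" using F sN by simp
    have "(\<Sum>i. ennreal \<alpha> * emeasure M (F i) + ennreal (1 - \<alpha>) * emeasure N (F i))
        = (\<Sum>i. ennreal \<alpha> * emeasure M (F i)) + (\<Sum>i. ennreal (1 - \<alpha>) * emeasure N (F i))"
      by (rule suminf_add[symmetric]) auto
    also have "\<dots> = ennreal \<alpha> * (\<Sum>i. emeasure M (F i)) + ennreal (1 - \<alpha>) * (\<Sum>i. emeasure N (F i))"
      by (simp add: ennreal_suminf_cmult)
    also have "\<dots> = ennreal \<alpha> * emeasure M (\<Union> (range F)) + ennreal (1 - \<alpha>) * emeasure N (\<Union> (range F))"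
      using F FN by (simp add: suminf_emeasure)
    finally show "(\<Sum>i. ennreal \<alpha> * emeasure M (F i) + ennreal (1 - \<alpha>) * emeasure N (F i)) =
         ennreal \<alpha> * emeasure M (\<Union> (range F)) + ennreal (1 - \<alpha>) * emeasure N (\<Union> (range F))" .
  qed
  show "emeasure (mixture \<alpha> M N) A = ennreal \<alpha> * emeasure M A + ennreal (1 - \<alpha>) * emeasure N A"
    unfolding mixture_def
    by (rule emeasure_measure_of_sigma[OF sets.sigma_algebra_axioms pos ca A])
qed

lemma mixture_nn_integral:
  assumes sN: "sets N = sets M" and a0: "0 \<le> \<alpha>" and a1: "\<alpha> \<le> 1"
    and f: "f \<in> borel_measurable M"
  shows "(\<integral>\<^sup>+x. f x \<partial>mixture \<alpha> M N) = ennreal \<alpha> * (\<integral>\<^sup>+x. f x \<partial>M) + ennreal (1 - \<alpha>) * (\<integral>\<^sup>+x. f x \<partial>N)"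
  using f
proof (induct rule: borel_measurable_induct)
  case (cong f g)
  have "f \<in> borel_measurable N" "g \<in> borel_measurable N" using cong(1,2) measurable_cong_sets[OF sN refl] by auto
  moreover have sp: "space N = space M" "space (mixture \<alpha> M N) = space M"
    using sets_eq_imp_space_eq[OF sN] mixture_props[OF sN a0 a1] by auto
  ultimately show ?case using cong
    by (subst (1 2 3) nn_integral_cong[of _ f g]) auto
next
  case (set A)
  then show ?case using mixture_props[OF sN a0 a1] sN by simp
next
  case (mult u c)
  have "u \<in> borel_measurable N" "u \<in> borel_measurable (mixture \<alpha> M N)"
    using mult(2) measurable_cong_sets[OF sN refl] measurable_cong_sets[OF mixture_props(1)[OF sN a0 a1] refl] by auto
  then show ?case using mult by (simp add: nn_integral_cmult algebra_simps)
next
  case (add u v)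
  have "u \<in> borel_measurable N" "u \<in> borel_measurable (mixture \<alpha> M N)"
     "v \<in> borel_measurable N" "v \<in> borel_measurable (mixture \<alpha> M N)"
    using add(1,4) measurable_cong_sets[OF sN refl] measurable_cong_sets[OF mixture_props(1)[OF sN a0 a1] refl] by auto
  then show ?case using add by (simp add: nn_integral_add algebra_simps distrib_left)
next
  case (seq U)
  have m: "\<And>i. U i \<in> borel_measurable N" "\<And>i. U i \<in> borel_measurable (mixture \<alpha> M N)"
    using seq(1) measurable_cong_sets[OF sN refl] measurable_cong_sets[OF mixture_props(1)[OF sN a0 a1] refl] by metis+
  have incM: "incseq (\<lambda>i. integral\<^sup>N M (U i))" and incN: "incseq (\<lambda>i. integral\<^sup>N N (U i))"
    using seq(4) by (auto simp: incseq_def le_fun_def intro!: nn_integral_mono)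
  have "(\<integral>\<^sup>+x. (SUP i. U i) x \<partial>mixture \<alpha> M N) = (SUP i. integral\<^sup>N (mixture \<alpha> M N) (U i))"
    unfolding SUP_apply by (rule nn_integral_monotone_convergence_SUP[OF seq(4) m(2)])
  also have "\<dots> = (SUP i. ennreal \<alpha> * integral\<^sup>N M (U i) + ennreal (1 - \<alpha>) * integral\<^sup>N N (U i))"
    using seq(3) by simp
  also have "\<dots> = (SUP i. ennreal \<alpha> * integral\<^sup>N M (U i)) + (SUP i. ennreal (1 - \<alpha>) * integral\<^sup>N N (U i))"
    by (rule ennreal_SUP_add) (auto intro!: mult_left_mono incM[THEN incseqD] incN[THEN incseqD] simp: incseq_def)
  also have "\<dots> = ennreal \<alpha> * (SUP i. integral\<^sup>N M (U i)) + ennreal (1 - \<alpha>) * (SUP i. integral\<^sup>N N (U i))"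
    by (simp add: SUP_mult_left_ennreal)
  also have "\<dots> = ennreal \<alpha> * (\<integral>\<^sup>+x. (SUP i. U i) x \<partial>M) + ennreal (1 - \<alpha>) * (\<integral>\<^sup>+x. (SUP i. U i) x \<partial>N)"
    unfolding SUP_apply using seq(4) m seq(1)
    by (simp add: nn_integral_monotone_convergence_SUP)
  finally show ?case .
qed

lemma enn2real_lin:
  assumes "a \<noteq> \<top>" "b \<noteq> \<top>" "0 \<le> x" "0 \<le> y"
  shows "enn2real (ennreal x * a + ennreal y * b) = x * enn2real a + y * enn2real b"
  using assms by (subst enn2real_plus) (auto simp: enn2real_mult ennreal_mult_less_top top.not_eq_extremum)

lemma mixture_integral:
  fixes f :: "_ \<Rightarrow> real"
  assumes sN: "sets N = sets M" and a0: "0 \<le> \<alpha>" and a1: "\<alpha> \<le> 1"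
    and fM: "integrable M f" and fN: "integrable N f"
  shows "integrable (mixture \<alpha> M N) f"
    "(\<integral>x. f x \<partial>mixture \<alpha> M N) = \<alpha> * (\<integral>x. f x \<partial>M) + (1 - \<alpha>) * (\<integral>x. f x \<partial>N)"
proof -
  have fm: "f \<in> borel_measurable M" using fM by auto
  have fm': "(\<lambda>x. - f x) \<in> borel_measurable M" using fm by measurable
  have fmix: "f \<in> borel_measurable (mixture \<alpha> M N)"
    using fm measurable_cong_sets[OF mixture_props(1)[OF sN a0 a1] refl] by metis
  have P: "(\<integral>\<^sup>+x. ennreal (f x) \<partial>mixture \<alpha> M N) = ennreal \<alpha> * (\<integral>\<^sup>+x. ennreal (f x) \<partial>M) + ennreal (1 - \<alpha>) * (\<integral>\<^sup>+x. ennreal (f x) \<partial>N)"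
    by (rule mixture_nn_integral[OF sN a0 a1]) (use fm in measurable)
  have Q: "(\<integral>\<^sup>+x. ennreal (- f x) \<partial>mixture \<alpha> M N) = ennreal \<alpha> * (\<integral>\<^sup>+x. ennreal (- f x) \<partial>M) + ennreal (1 - \<alpha>) * (\<integral>\<^sup>+x. ennreal (- f x) \<partial>N)"
    by (rule mixture_nn_integral[OF sN a0 a1]) (use fm in measurable)
  have fin: "(\<integral>\<^sup>+x. ennreal (f x) \<partial>M) \<noteq> \<infinity>" "(\<integral>\<^sup>+x. ennreal (- f x) \<partial>M) \<noteq> \<infinity>"
    "(\<integral>\<^sup>+x. ennreal (f x) \<partial>N) \<noteq> \<infinity>" "(\<integral>\<^sup>+x. ennreal (- f x) \<partial>N) \<noteq> \<infinity>"
    using fM fN by (auto simp: real_integrable_def)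
  show I: "integrable (mixture \<alpha> M N) f"
    unfolding real_integrable_def using fmix P Q fin by (simp add: ennreal_mult_eq_top_iff)
  show "(\<integral>x. f x \<partial>mixture \<alpha> M N) = \<alpha> * (\<integral>x. f x \<partial>M) + (1 - \<alpha>) * (\<integral>x. f x \<partial>N)"
    unfolding real_lebesgue_integral_def[OF I] real_lebesgue_integral_def[OF fM] real_lebesgue_integral_def[OF fN] P Q
    using fin a0 a1 by (simp add: enn2real_lin algebra_simps)
qed

lemma support_props:
  fixes M :: "'b::euclidean_space measure"
  assumes sM: "sets M = sets borel"
  shows "measure_support M \<in> sets borel" "AE z in M. z \<in> measure_support M"
proof -
  define F where "F = {U::'b set. open U \<and> emeasure M U = 0}"
  obtain F' where F': "F' \<subseteq> F" "countable F'" "\<Union>F' = \<Union>F"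
    using Lindelof[of F] unfolding F_def by auto
  have eq: "- measure_support M = \<Union>F"
    unfolding F_def measure_support_def by (auto simp: not_less)
  have op: "open (\<Union>F)" unfolding F_def by auto
  show "measure_support M \<in> sets borel"
    using op eq by (metis borel_closed closed_def double_complement)
  have "(\<Union>U\<in>F'. U) \<in> null_sets M"
    apply (rule null_sets_UN'[OF F'(2)])
    using F'(1) sM unfolding F_def by (auto simp: null_sets_def)
  then have "\<Union>F \<in> null_sets M" using F'(3) by simp
  then show "AE z in M. z \<in> measure_support M"
    by (rule AE_I') (use eq in auto)
qed

lemma coupling_bound:
  fixes g :: "'b::euclidean_space \<Rightarrow> real"
  assumes pi: "\<pi> \<in> couplings M N" and gM: "integrable M g" and gN: "integrable N g"
    and S: "S \<in> sets borel" and SM: "AE x in M. x \<in> S" and SN: "AE x in N. x \<in> S"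
    and lip: "\<And>x y. x \<in> S \<Longrightarrow> y \<in> S \<Longrightarrow> g y - g x \<le> c * dist x y" and c: "c \<ge> 0"
    and fin: "(\<integral>\<^sup>+ p. ennreal (dist (fst p) (snd p)) \<partial>\<pi>) < \<top>"
  shows "(\<integral>x. g x \<partial>N) - (\<integral>x. g x \<partial>M) \<le> c * enn2real (\<integral>\<^sup>+ p. ennreal (dist (fst p) (snd p)) \<partial>\<pi>)"
proof -
  have ps: "prob_space \<pi>" and spi: "sets \<pi> = sets (borel \<Otimes>\<^sub>M borel)"
    and Md: "distr \<pi> borel fst = M" and Nd: "distr \<pi> borel snd = N"
    using pi unfolding couplings_def by auto
  have mcong: "measurable \<pi> = measurable (borel \<Otimes>\<^sub>M (borel::'b measure))"
    by (rule ext, rule measurable_cong_sets[OF spi refl])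
  have mf[measurable]: "fst \<in> measurable \<pi> borel" "snd \<in> measurable \<pi> borel"
    unfolding mcong by auto
  have gb[measurable]: "g \<in> borel_measurable borel"
    using gM unfolding Md[symmetric] by auto
  have mdist: "(\<lambda>p. dist (fst p) (snd p)) \<in> borel_measurable \<pi>" by measurable
  have ig1: "integrable \<pi> (\<lambda>p. g (fst p))"
    using gM unfolding Md[symmetric] by (subst (asm) integrable_distr_eq) auto
  have ig2: "integrable \<pi> (\<lambda>p. g (snd p))"
    using gN unfolding Nd[symmetric] by (subst (asm) integrable_distr_eq) auto
  have e1: "(\<integral>x. g x \<partial>M) = (\<integral>p. g (fst p) \<partial>\<pi>)"
    unfolding Md[symmetric] by (rule integral_distr) auto
  have e2: "(\<integral>x. g x \<partial>N) = (\<integral>p. g (snd p) \<partial>\<pi>)"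
    unfolding Nd[symmetric] by (rule integral_distr) auto
  have id: "integrable \<pi> (\<lambda>p. dist (fst p) (snd p))"
    by (rule integrableI_bounded) (use mdist fin in auto)
  have ed: "enn2real (\<integral>\<^sup>+ p. ennreal (dist (fst p) (snd p)) \<partial>\<pi>) = (\<integral>p. dist (fst p) (snd p) \<partial>\<pi>)"
    by (subst nn_integral_eq_integral[OF id]) auto
  have Sm: "{x \<in> space borel. x \<in> S} \<in> sets borel" using S by simp
  have A1: "AE p in \<pi>. fst p \<in> S"
    using SM unfolding Md[symmetric] by (subst (asm) AE_distr_iff[OF mf(1) Sm])
  have A2: "AE p in \<pi>. snd p \<in> S"
    using SN unfolding Nd[symmetric] by (subst (asm) AE_distr_iff[OF mf(2) Sm])
  have "(\<integral>p. g (snd p) - g (fst p) \<partial>\<pi>) \<le> (\<integral>p. c * dist (fst p) (snd p) \<partial>\<pi>)"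
    apply (rule integral_mono_AE)
    using ig1 ig2 id A1 A2 lip by (auto simp: dist_commute)
  then show ?thesis using e1 e2 ed ig1 ig2 by simp
qed

lemma norm_convex_identity:
  fixes x y :: "'a::real_inner"
  shows "norm (a *\<^sub>R x + (1 - a) *\<^sub>R y) ^ 2 = a * norm x ^ 2 + (1 - a) * norm y ^ 2 - a * (1 - a) * norm (x - y) ^ 2"
  unfolding power2_norm_eq_inner
  by (simp add: inner_add_left inner_add_right inner_diff_left inner_diff_right inner_commute algebra_simps)

lemma le_by_eps:
  fixes x y c :: real
  assumes c: "c \<ge> 0" and h: "\<And>\<delta>. \<delta> > 0 \<Longrightarrow> x \<le> c * (y + \<delta>)"
  shows "x \<le> c * y"
proof (rule field_le_epsilon)
  fix e :: real assume e: "0 < e"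
  have "x \<le> c * (y + e / (c + 1))" using h e c by simp
  also have "\<dots> = c * y + e * (c / (c + 1))" using c by (simp add: field_simps)
  also have "\<dots> \<le> c * y + e * 1" using e c by (intro add_left_mono mult_left_mono) auto
  finally show "x \<le> c * y + e" by simp
qed


lemma final_aux:
  fixes P a b u L X Y Dd :: real
  assumes "P \<le> u * a + (1 - u) * b - u * (1 - u) * L / 2 * Dd"
  shows "P - L / 2 * (u * X + (1 - u) * Y - u * (1 - u) * Dd) \<le> u * (a - L / 2 * X) + (1 - u) * (b - L / 2 * Y)"
proof -
  have "u * (a - L / 2 * X) + (1 - u) * (b - L / 2 * Y) - (P - L / 2 * (u * X + (1 - u) * Y - u * (1 - u) * Dd))
      = (u * a + (1 - u) * b - u * (1 - u) * L / 2 * Dd) - P"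
    by (simp add: field_simps)
  then show ?thesis using assms by linarith
qed

theorem theorem3p1:
  fixes \<Theta> :: "'a::euclidean_space set"
    and D :: "'a \<Rightarrow> 'b::euclidean_space measure"
    and l :: "'b \<Rightarrow> 'a \<Rightarrow> real"
    and grad :: "'b \<Rightarrow> 'a \<Rightarrow> 'a"
    and \<epsilon> \<beta> \<gamma> :: real
  assumes closed: "closed \<Theta>" and convex: "convex \<Theta>"
    and distr: "\<And>\<theta>. \<theta> \<in> \<Theta> \<Longrightarrow> prob_space (D \<theta>) \<and> sets (D \<theta>) = sets borel"
    and grad: "\<And>z \<theta>. \<theta> \<in> \<Theta> \<Longrightarrow>
        ((\<lambda>t. l z t) has_derivative (\<lambda>h. grad z \<theta> \<bullet> h)) (at \<theta> within \<Theta>)"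
    and int_l: "\<And>\<theta> \<theta>0. \<theta> \<in> \<Theta> \<Longrightarrow> \<theta>0 \<in> \<Theta> \<Longrightarrow> integrable (D \<theta>0) (\<lambda>z. l z \<theta>)"
    and int_grad: "\<And>\<theta> \<theta>0. \<theta> \<in> \<Theta> \<Longrightarrow> \<theta>0 \<in> \<Theta> \<Longrightarrow> integrable (D \<theta>0) (\<lambda>z. grad z \<theta>)"
    and eps_nonneg: "\<epsilon> \<ge> 0" and beta_nonneg: "\<beta> \<ge> 0"
    and sensitive: "\<And>\<theta> \<theta>'. \<theta> \<in> \<Theta> \<Longrightarrow> \<theta>' \<in> \<Theta> \<Longrightarrow>
        wasserstein1 (D \<theta>) (D \<theta>') \<le> ennreal (\<epsilon> * norm (\<theta> - \<theta>'))"
    and smooth: "\<And>\<theta> z z'. \<theta> \<in> \<Theta> \<Longrightarrow>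
        z \<in> (\<Union>\<theta>'\<in>\<Theta>. measure_support (D \<theta>')) \<Longrightarrow> z' \<in> (\<Union>\<theta>'\<in>\<Theta>. measure_support (D \<theta>')) \<Longrightarrow>
        norm (grad z \<theta> - grad z' \<theta>) \<le> \<beta> * norm (z - z')"
    and strongly_convex: "\<And>\<theta> \<theta>' \<theta>0. \<theta> \<in> \<Theta> \<Longrightarrow> \<theta>' \<in> \<Theta> \<Longrightarrow> \<theta>0 \<in> \<Theta> \<Longrightarrow>
        (\<integral>z. l z \<theta> \<partial>(D \<theta>0)) \<ge> (\<integral>z. l z \<theta>' \<partial>(D \<theta>0))
          + (\<integral>z. grad z \<theta>' \<bullet> (\<theta> - \<theta>') \<partial>(D \<theta>0)) + \<gamma> / 2 * norm (\<theta> - \<theta>') ^ 2"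
    and mixture_dominance: "\<And>\<theta> \<theta>' \<theta>0 \<alpha>. \<theta> \<in> \<Theta> \<Longrightarrow> \<theta>' \<in> \<Theta> \<Longrightarrow> \<theta>0 \<in> \<Theta> \<Longrightarrow>
        0 < \<alpha> \<Longrightarrow> \<alpha> < 1 \<Longrightarrow>
        (\<integral>z. l z \<theta>0 \<partial>(D (\<alpha> *\<^sub>R \<theta> + (1 - \<alpha>) *\<^sub>R \<theta>')))
          \<le> (\<integral>z. l z \<theta>0 \<partial>(mixture \<alpha> (D \<theta>) (D \<theta>')))"
  shows "lambda_convex_on (\<gamma> - 2 * \<epsilon> * \<beta>) \<Theta> (perf_risk D l)"
  proof -
  let ?PR = "perf_risk D l"
  have key: "?PR (a *\<^sub>R x + (1 - a) *\<^sub>R y) \<le> a * ?PR x + (1 - a) * ?PR y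
      - a * (1 - a) * (\<gamma> - 2 * \<epsilon> * \<beta>) / 2 * norm (x - y) ^ 2"
    if x: "x \<in> \<Theta>" and y: "y \<in> \<Theta>" and a0: "0 < a" and a1: "a < 1" for x y a
  proof -
    define t where "t = a *\<^sub>R x + (1 - a) *\<^sub>R y"
    have t: "t \<in> \<Theta>" unfolding t_def using convex x y a0 a1 by (intro convexD) auto
    define v where "v = x - y"
    define d where "d = norm v"
    define g where "g = (\<lambda>z. grad z t \<bullet> v)"
    have sx: "sets (D x) = sets borel" and sy: "sets (D y) = sets borel"
      using distr x y by auto
    have gx: "integrable (D x) g" and gy: "integrable (D y) g"
      unfolding g_def using int_grad[OF t x] int_grad[OF t y] by auto
    define G1 where "G1 = (\<integral>z. g z \<partial>D x)"
    define G2 where "G2 = (\<integral>z. g z \<partial>D y)"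
    define A where "A = (\<integral>z. l z t \<partial>D x)"
    define B where "B = (\<integral>z. l z t \<partial>D y)"
    have s1: "?PR t \<le> a * A + (1 - a) * B"
    proof -
      have "?PR t \<le> (\<integral>z. l z t \<partial>mixture a (D x) (D y))"
        unfolding perf_risk_def t_def using mixture_dominance[OF x y t a0 a1] by (simp add: t_def)
      also have "\<dots> = a * A + (1 - a) * B"
        unfolding A_def B_def
        by (rule mixture_integral(2)) (use sx sy a0 a1 int_l[OF t x] int_l[OF t y] in auto)
      finally show ?thesis .
    qed
    have s2: "?PR x \<ge> A + (1 - a) * G1 + \<gamma> / 2 * ((1 - a) ^ 2 * d ^ 2)"
    proof -
      have e: "x - t = (1 - a) *\<^sub>R v" unfolding t_def v_def by (simp add: algebra_simps)
      have "(\<integral>z. grad z t \<bullet> (x - t) \<partial>D x) = (1 - a) * G1"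
        unfolding e G1_def g_def by simp
      moreover have "norm (x - t) ^ 2 = (1 - a) ^ 2 * d ^ 2"
        unfolding e d_def using a1 by (simp add: power_mult_distrib)
      ultimately show ?thesis using strongly_convex[OF x t x]
        unfolding perf_risk_def A_def by simp
    qed
    have s3: "?PR y \<ge> B - a * G2 + \<gamma> / 2 * (a ^ 2 * d ^ 2)"
    proof -
      have e: "y - t = (- a) *\<^sub>R v" unfolding t_def v_def by (simp add: algebra_simps)
      have "(\<integral>z. grad z t \<bullet> (y - t) \<partial>D y) = - a * G2"
        unfolding e G2_def g_def by simp
      moreover have "norm (y - t) ^ 2 = a ^ 2 * d ^ 2"
        unfolding e d_def using a0 by (simp add: power_mult_distrib)
      ultimately show ?thesis using strongly_convex[OF y t y]
        unfolding perf_risk_def B_def by simp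
    qed
    have s4: "G2 - G1 \<le> \<epsilon> * \<beta> * d ^ 2"
    proof -
      define S where "S = measure_support (D x) \<union> measure_support (D y)"
      have S: "S \<in> sets borel" unfolding S_def using support_props(1)[OF sx] support_props(1)[OF sy] by auto
      have SM: "AE z in D x. z \<in> S" using support_props(2)[OF sx] unfolding S_def by auto
      have SN: "AE z in D y. z \<in> S" using support_props(2)[OF sy] unfolding S_def by auto
      have c: "\<beta> * d \<ge> 0" using beta_nonneg unfolding d_def by simp
      have lip: "g z' - g z \<le> (\<beta> * d) * dist z z'" if "z \<in> S" "z' \<in> S" for z z'
      proof -
        have zz: "z \<in> (\<Union>\<theta>'\<in>\<Theta>. measure_support (D \<theta>'))" "z' \<in> (\<Union>\<theta>'\<in>\<Theta>. measure_support (D \<theta>'))"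
          using that x y unfolding S_def by auto
        have "g z' - g z = (grad z' t - grad z t) \<bullet> v" unfolding g_def by (simp add: inner_diff_left)
        also have "\<dots> \<le> norm (grad z' t - grad z t) * norm v" by (rule norm_cauchy_schwarz)
        also have "\<dots> \<le> (\<beta> * norm (z' - z)) * norm v"
          by (rule mult_right_mono[OF smooth[OF t zz(2) zz(1)]]) simp
        finally show ?thesis unfolding d_def by (simp add: dist_norm norm_minus_commute algebra_simps)
      qed
      show ?thesis
      proof -
        have "G2 - G1 \<le> (\<beta> * d) * (\<epsilon> * d)"
        proof (rule le_by_eps[OF c])
          fix \<delta> :: real assume \<delta>: "\<delta> > 0"
          have "wasserstein1 (D x) (D y) < ennreal (\<epsilon> * d + \<delta>)"
            using sensitive[OF x y] \<delta> eps_nonneg unfolding d_def v_def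
            by (metis add.right_neutral add_strict_left_mono ennreal_lessI le_less_trans linorder_not_le not_less_iff_gr_or_eq order.refl ennreal_less_iff mult_nonneg_nonneg norm_ge_zero add_nonneg_pos le_add_same_cancel1 ennreal_le_iff)
          then obtain \<pi> where pi: "\<pi> \<in> couplings (D x) (D y)"
            and lt: "(\<integral>\<^sup>+ p. ennreal (dist (fst p) (snd p)) \<partial>\<pi>) < ennreal (\<epsilon> * d + \<delta>)"
            unfolding wasserstein1_def by (auto simp: INF_less_iff)
          have fin: "(\<integral>\<^sup>+ p. ennreal (dist (fst p) (snd p)) \<partial>\<pi>) < \<top>"
            using lt by (meson ennreal_less_top order.strict_trans)
          have "enn2real (\<integral>\<^sup>+ p. ennreal (dist (fst p) (snd p)) \<partial>\<pi>) \<le> \<epsilon> * d + \<delta>"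
            using lt fin by (metis enn2real_le ennreal_enn2real less_imp_le less_top not_le ennreal_le_iff2 linorder_not_less enn2real_nonneg order_trans nle_le ennreal_less_iff)
          then have "(\<beta> * d) * enn2real (\<integral>\<^sup>+ p. ennreal (dist (fst p) (snd p)) \<partial>\<pi>) \<le> (\<beta> * d) * (\<epsilon> * d + \<delta>)"
            by (rule mult_left_mono[OF _ c])
          moreover have "G2 - G1 \<le> (\<beta> * d) * enn2real (\<integral>\<^sup>+ p. ennreal (dist (fst p) (snd p)) \<partial>\<pi>)"
            unfolding G1_def G2_def
            by (rule coupling_bound[OF pi gx gy S SM SN lip c fin])
          ultimately show "G2 - G1 \<le> (\<beta> * d) * (\<epsilon> * d + \<delta>)" by linarith
        qed
        then show ?thesis by (simp add: power2_eq_square algebra_simps)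
      qed
    qed
    have aa: "a * (1 - a) \<ge> 0" using a0 a1 by simp
    have "a * (1 - a) * (G2 - G1) \<le> a * (1 - a) * (\<epsilon> * \<beta> * d ^ 2)"
      by (rule mult_left_mono[OF s4 aa])
    moreover have "a * A \<le> a * (?PR x - (1 - a) * G1 - \<gamma> / 2 * ((1 - a) ^ 2 * d ^ 2))"
      using s2 a0 by (intro mult_left_mono) auto
    moreover have "(1 - a) * B \<le> (1 - a) * (?PR y + a * G2 - \<gamma> / 2 * (a ^ 2 * d ^ 2))"
      using s3 a1 by (intro mult_left_mono) auto
    ultimately have "?PR t \<le> a * (?PR x - (1 - a) * G1 - \<gamma> / 2 * ((1 - a) ^ 2 * d ^ 2))
        + (1 - a) * (?PR y + a * G2 - \<gamma> / 2 * (a ^ 2 * d ^ 2))"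
      and m: "a * (1 - a) * (G2 - G1) \<le> a * (1 - a) * (\<epsilon> * \<beta> * d ^ 2)"
      using s1 by linarith+
    moreover have "a * (?PR x - (1 - a) * G1 - \<gamma> / 2 * ((1 - a) ^ 2 * d ^ 2))
        + (1 - a) * (?PR y + a * G2 - \<gamma> / 2 * (a ^ 2 * d ^ 2))
        = a * ?PR x + (1 - a) * ?PR y + a * (1 - a) * (G2 - G1) - \<gamma> / 2 * (a * (1 - a) * d ^ 2)"
      by (simp add: field_simps power2_eq_square)
    moreover have "a * (1 - a) * (\<epsilon> * \<beta> * d ^ 2) - \<gamma> / 2 * (a * (1 - a) * d ^ 2)
        = - (a * (1 - a) * (\<gamma> - 2 * \<epsilon> * \<beta>) / 2 * d ^ 2)"
      by (simp add: field_simps)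
    ultimately have "?PR t \<le> a * ?PR x + (1 - a) * ?PR y - a * (1 - a) * (\<gamma> - 2 * \<epsilon> * \<beta>) / 2 * d ^ 2"
      by linarith
    then show ?thesis unfolding t_def d_def v_def .
  qed
  show ?thesis
    unfolding lambda_convex_on_def convex_on_def
  proof (intro conjI ballI allI impI convex)
    fix x y and u w :: real
    assume x: "x \<in> \<Theta>" and y: "y \<in> \<Theta>" and u: "u \<ge> 0" and w: "w \<ge> 0" and uw: "u + w = 1"
    let ?lam = "\<gamma> - 2 * \<epsilon> * \<beta>"
    have wu: "w = 1 - u" using uw by simp
    show "?PR (u *\<^sub>R x + w *\<^sub>R y) - ?lam / 2 * norm (u *\<^sub>R x + w *\<^sub>R y) ^ 2
        \<le> u * (?PR x - ?lam / 2 * norm x ^ 2) + w * (?PR y - ?lam / 2 * norm y ^ 2)"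
    proof (cases "u = 0 \<or> u = 1")
      case True
      then show ?thesis using wu by auto
    next
      case False
      then have u0: "0 < u" and u1: "u < 1" using u uw w by auto
      show ?thesis unfolding wu norm_convex_identity
        by (rule final_aux[OF key[OF x y u0 u1]])
    qed
  qed
qed

end
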